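(* Let $r\geq 3$, let $D$ be an $m$-colored semicomplete $r$-partite digraph, let $k\in\{2,3\}$, and let $x,y$ be distinct vertices of $D$. Suppose there exists a directed path from $x$ to $y$ in $D$ that uses exactly $k$ colors, and there is no directed path from $y$ to $x$ in $D$ using at most $k$ colors. Then $d(x,y)\leq 4$.
   Context: A semicomplete $r$-partite digraph ($r\ge 2$) is a digraph whose vertex set is partitioned into $r$ nonempty independent sets (partite sets) such that for any two vertices $u,v$ in different partite sets at least one of the arcs $(u,v)$, $(v,u)$ is present (both may be present); there are no arcs inside a partite set. An $m$-colored digraph is a digraph whose arcs are each assigned one of $m$ colors. A directed path (no repeated vertices) is $j$-colored if its arcs use exactly $j$ distinct colors; it uses at most $k$ colors if it is $j$-colored for some $1\le j\le k$. $d(x,y)$ denotes the minimum number of arcs of a directed path from $x$ to $y$. *)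

theory Defs
  imports Main
begin

text \<open>A digraph on vertex set V with arc set A (pairs), partite sets given by a
partition function part : V -> {0..<r} which is onto (partite sets nonempty).\<close>

definition semicomplete_multipartite ::
  "'a set \<Rightarrow> ('a \<times> 'a) set \<Rightarrow> ('a \<Rightarrow> nat) \<Rightarrow> nat \<Rightarrow> bool" where
  "semicomplete_multipartite V A part r \<longleftrightarrow>
     finite V \<and> r \<ge> 2 \<and>
     A \<subseteq> V \<times> V \<and>
     part ` V = {0..<r} \<and>
     (\<forall>(u,v)\<in>A. part u \<noteq> part v) \<and>
     (\<forall>u\<in>V. \<forall>v\<in>V. part u \<noteq> part v \<longrightarrow> (u,v) \<in> A \<or> (v,u) \<in> A)"

definition m_colored :: "('a \<times> 'a) set \<Rightarrow> ('a \<times> 'a \<Rightarrow> nat) \<Rightarrow> nat \<Rightarrow> bool" where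
  "m_colored A col m \<longleftrightarrow> (\<forall>e\<in>A. col e < m)"

definition dpath :: "('a \<times> 'a) set \<Rightarrow> 'a list \<Rightarrow> 'a \<Rightarrow> 'a \<Rightarrow> bool" where
  "dpath A p x y \<longleftrightarrow> p \<noteq> [] \<and> hd p = x \<and> last p = y \<and> distinct p \<and>
     (\<forall>i. Suc i < length p \<longrightarrow> (p ! i, p ! Suc i) \<in> A)"

definition path_arcs :: "'a list \<Rightarrow> ('a \<times> 'a) list" where
  "path_arcs p = zip (butlast p) (tl p)"

definition num_colors :: "('a \<times> 'a \<Rightarrow> nat) \<Rightarrow> 'a list \<Rightarrow> nat" where
  "num_colors col p = card (col ` set (path_arcs p))"

definition dist :: "('a \<times> 'a) set \<Rightarrow> 'a \<Rightarrow> 'a \<Rightarrow> nat" where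
  "dist A x y = (LEAST n. \<exists>p. dpath A p x y \<and> length p = Suc n)"

end

theory Submission
  imports Defs
begin

lemma nc2: "num_colors col [a,b,c] \<ge> 1 \<and> num_colors col [a,b,c] \<le> 2"
  by (auto simp: num_colors_def path_arcs_def card_insert_if)

lemma nc1: "num_colors col [a,b] = 1"
  by (auto simp: num_colors_def path_arcs_def)

theorem mainTheorem2:
  fixes V :: "'a set" and A :: "('a \<times> 'a) set" and part :: "'a \<Rightarrow> nat"
    and col :: "'a \<times> 'a \<Rightarrow> nat" and r m k :: nat and x y :: 'a
  assumes "r \<ge> 3"
    and "semicomplete_multipartite V A part r"
    and "m_colored A col m"
    and "k \<in> {2, 3}"
    and "x \<in> V" and "y \<in> V" and "x \<noteq> y"
    and "\<exists>p. dpath A p x y \<and> num_colors col p = k"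
    and "\<not> (\<exists>p. dpath A p y x \<and> 1 \<le> num_colors col p \<and> num_colors col p \<le> k)"
  shows "dist A x y \<le> 4"
proof -
  note sc = assms(2)[unfolded semicomplete_multipartite_def]
  have AV: "\<And>u v. (u,v) \<in> A \<Longrightarrow> u \<in> V \<and> v \<in> V" using sc by blast
  have lf: "\<And>u v. (u,v) \<in> A \<Longrightarrow> part u \<noteq> part v" using sc by blast
  have semi: "\<And>u v. u \<in> V \<Longrightarrow> v \<in> V \<Longrightarrow> part u \<noteq> part v \<Longrightarrow> (u,v) \<in> A \<or> (v,u) \<in> A"
    using sc by blast
  have k2: "2 \<le> k" using assms(4) by auto
  have noback: "\<And>z. (y,z) \<in> A \<Longrightarrow> (z,x) \<in> A \<Longrightarrow> False"
  proof -
    fix z assume a: "(y,z) \<in> A" "(z,x) \<in> A"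
    have "dpath A [y,z,x] y x" unfolding dpath_def
      using a lf assms(7) by (auto simp: less_Suc_eq nth_Cons split: nat.splits)
    thus False using assms(9) nc2[of col y z x] k2 by auto
  qed
  have ex: "\<exists>q. dpath A q x y \<and> length q \<le> 5"
  proof (rule ccontr)
    assume nq: "\<not> ?thesis"
    have H1: "(x,y) \<notin> A"
    proof
      assume a: "(x,y) \<in> A"
      have "dpath A [x,y] x y" unfolding dpath_def
        using a assms(7) by (auto simp: less_Suc_eq nth_Cons split: nat.splits)
      thus False using nq by force
    qed
    have H2: "\<And>z. (x,z) \<in> A \<Longrightarrow> (z,y) \<in> A \<Longrightarrow> False"
    proof -
      fix z assume a: "(x,z) \<in> A" "(z,y) \<in> A"
      have "dpath A [x,z,y] x y" unfolding dpath_def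
        using a lf assms(7) by (auto simp: less_Suc_eq nth_Cons split: nat.splits)
      thus False using nq by force
    qed
    have H3: "\<And>a b. (x,a) \<in> A \<Longrightarrow> (a,b) \<in> A \<Longrightarrow> (b,y) \<in> A \<Longrightarrow> False"
    proof -
      fix a b assume h: "(x,a) \<in> A" "(a,b) \<in> A" "(b,y) \<in> A"
      have "b \<noteq> x" "a \<noteq> y" using H1 h by auto
      hence "dpath A [x,a,b,y] x y" unfolding dpath_def
        using h lf assms(7) by (auto simp: less_Suc_eq nth_Cons split: nat.splits)
      thus False using nq by force
    qed
    have H4: "\<And>a w b. (x,a) \<in> A \<Longrightarrow> (a,w) \<in> A \<Longrightarrow> (w,b) \<in> A \<Longrightarrow> (b,y) \<in> A \<Longrightarrow> False"
    proof -
      fix a w b assume h: "(x,a) \<in> A" "(a,w) \<in> A" "(w,b) \<in> A" "(b,y) \<in> A"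
      have "b \<noteq> x" "a \<noteq> y" using H1 h by auto
      moreover have "a \<noteq> b" "w \<noteq> x" "w \<noteq> y" using H2 h by auto
      ultimately have "dpath A [x,a,w,b,y] x y" unfolding dpath_def
        using h lf assms(7) by (auto simp: less_Suc_eq nth_Cons split: nat.splits)
      thus False using nq by force
    qed
    have pxy: "part x = part y"
    proof (rule ccontr)
      assume "part x \<noteq> part y"
      then have "(x,y) \<in> A \<or> (y,x) \<in> A" using semi assms(5,6) by blast
      moreover have "(y,x) \<notin> A"
      proof
        assume a: "(y,x) \<in> A"
        have "dpath A [y,x] y x" unfolding dpath_def
          using a assms(7) by (auto simp: less_Suc_eq nth_Cons split: nat.splits)
        thus False using assms(9) nc1[of col y x] k2 by (metis le_numeral_extra(4) numeral_le_one_iff one_le_numeral order_trans semiring_norm(69))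
      qed
      ultimately show False using H1 by blast
    qed
    have cls: "\<And>v. v \<in> V \<Longrightarrow> part v \<noteq> part x \<Longrightarrow> (v,y) \<notin> A \<Longrightarrow> (x,v) \<in> A"
    proof -
      fix v assume h: "v \<in> V" "part v \<noteq> part x" "(v,y) \<notin> A"
      have "(y,v) \<in> A" using semi[of v y] h pxy assms(6) by auto
      hence "(v,x) \<notin> A" using noback by blast
      thus "(x,v) \<in> A" using semi[of v x] h assms(5) by auto
    qed
    obtain p where p: "dpath A p x y" using assms(8) by blast
    define n where "n = length p - 1"
    have pne: "p \<noteq> []" and p0: "p ! 0 = x" and pn: "p ! n = y"
      and arc: "\<And>i. i < n \<Longrightarrow> (p ! i, p ! Suc i) \<in> A"
      using p unfolding dpath_def n_def by (auto simp: hd_conv_nth last_conv_nth)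
    have n1: "n \<ge> 1" using p0 pn assms(7) by (cases n) auto
    have inS: "(p ! (n-1), y) \<in> A" using arc[of "n-1"] n1 pn by auto
    define j where "j = (LEAST j. (p ! j, y) \<in> A)"
    have jS: "(p ! j, y) \<in> A" unfolding j_def by (rule LeastI, rule inS)
    have jle: "j \<le> n - 1" unfolding j_def by (rule Least_le, rule inS)
    have jmin: "\<And>i. i < j \<Longrightarrow> (p ! i, y) \<notin> A" unfolding j_def by (rule not_less_Least)
    have j0: "j \<noteq> 0" using jS p0 H1 by (metis)
    define v where "v = p ! (j-1)"
    have vj: "(v, p ! j) \<in> A" using arc[of "j-1"] j0 jle n1 unfolding v_def by auto
    have vy: "(v,y) \<notin> A" using jmin[of "j-1"] j0 unfolding v_def by auto
    show False
    proof (cases "part v = part x")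
      case False
      have "(x,v) \<in> A" using cls[OF _ False vy] AV vj by blast
      thus False using H3 vj jS by blast
    next
      case True
      show False
      proof (cases "j = 1")
        case True
        then have "v = x" using p0 unfolding v_def by simp
        thus False using H2 vj jS by blast
      next
        case False
        define u where "u = p ! (j-2)"
        have uv: "(u,v) \<in> A" using arc[of "j-2"] j0 False jle n1 unfolding u_def v_def
          by (metis Suc_diff_Suc Suc_lessD diff_Suc_1 le_less_trans less_one
              linorder_neqE_nat numeral_2_eq_2 nat_neq_iff diff_less zero_less_diff not_less
              less_imp_diff_less)
        have uy: "(u,y) \<notin> A" using jmin[of "j-2"] j0 unfolding u_def by auto
        have "part u \<noteq> part x" using lf[OF uv] True by simp
        hence "(x,u) \<in> A" using cls[OF _ _ uy] AV uv by blast
        thus False using H4 uv vj jS by blast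
      qed
    qed
  qed
  then obtain q where q: "dpath A q x y" "length q \<le> 5" by blast
  have qne: "q \<noteq> []" using q unfolding dpath_def by auto
  have "dist A x y \<le> length q - 1" unfolding dist_def
    by (rule Least_le) (use q qne in auto)
  thus ?thesis using q by simp
qed

end
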